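(* For every $\Delta q>0$ there exist $k>0$ and $\theta\in(0,1/\Delta q)$ such that, when $1/b$ is Gamma distributed with shape $k$ and scale $\theta$, $$e^{(k+1)\ln(1+\Delta q\,\theta)}=\frac{\mathbb E(1/b)}{M'_{1/b}(-\Delta q)}<M_{1/b}(\Delta q)=(1-\Delta q\,\theta)^{-k},$$ i.e. the R$^2$DP Laplace mechanism with Gamma-distributed $1/b$ can satisfy the necessary condition $\frac{\mathbb E(1/b)}{M'_{1/b}(-\Delta q)}<M_{1/b}(\Delta q)$ for improving on the Laplace mechanism.
   Context: $M_{1/b}(t)=\mathbb E[e^{t/b}]$ is the moment generating function of $1/b$ and $M'_{1/b}$ its derivative. For the Gamma distribution with shape $k$ and scale $\theta$, $M(t)=(1-\theta t)^{-k}$ for $t<1/\theta$. The R$^2$DP Laplace mechanism adds $\mathrm{Lap}(b)$ noise (density $\frac1{2b}e^{-|x|/b}$) with random scale $b$ to a query of sensitivity $\Delta q$. *)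

theory Defs
  imports "HOL-Probability.Probability"
begin

definition gamma_density :: "real \<Rightarrow> real \<Rightarrow> real \<Rightarrow> real" where
  "gamma_density k \<theta> x =
     (if x > 0 then x powr (k - 1) * exp (- x / \<theta>) / (Gamma k * \<theta> powr k) else 0)"

definition mgf :: "(real \<Rightarrow> real) \<Rightarrow> real \<Rightarrow> real" where
  "mgf f t = (\<integral>x. exp (t * x) * f x \<partial>lborel)"

definition mean :: "(real \<Rightarrow> real) \<Rightarrow> real" where
  "mean f = (\<integral>x. x * f x \<partial>lborel)"

end

theory Submission
  imports Defs
begin

lemma erl_int:
  assumes "(0::real) < l"
  shows "has_bochner_integral lborel (erlang_density k l) 1"
proof -
  have "(\<integral>\<^sup>+ x. ennreal (erlang_density k l x) \<partial>lborel) = ennreal 1"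
    using nn_integral_erlang_ith_moment[OF assms, of k 0] by simp
  then show ?thesis
    by (intro has_bochner_integral_nn_integral) (use assms in auto)
qed

lemma int_AE:
  fixes f :: "real \<Rightarrow> real"
  assumes "0 < l" "f \<in> borel_measurable borel"
    and "\<And>x. x \<noteq> 0 \<Longrightarrow> f x = c * erlang_density k l x"
  shows "(\<integral>x. f x \<partial>lborel) = c"
proof -
  have h: "has_bochner_integral lborel (\<lambda>x. c * erlang_density k l x) (c * 1)"
    by (intro has_bochner_integral_mult_right erl_int assms)
  have "AE x in lborel. f x = c * erlang_density k l x"
    using AE_lborel_singleton[of 0] by eventually_elim (use assms(3) in auto)
  then have "has_bochner_integral lborel f c"
    using h assms(2) by (subst has_bochner_integral_cong_AE) auto
  then show ?thesis by (simp add: has_bochner_integral_integral_eq)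
qed

lemma gd1: "0 < \<theta> \<Longrightarrow> gamma_density 1 \<theta> x = (if x > 0 then exp (- x / \<theta>) / \<theta> else 0)"
  by (simp add: gamma_density_def)

lemma mgf1:
  assumes "0 < \<theta>" "t < 1 / \<theta>"
  shows "mgf (gamma_density 1 \<theta>) t = 1 / (1 - \<theta> * t)"
proof -
  define c where "c = 1 / \<theta> - t"
  have c: "c > 0" using assms by (simp add: c_def)
  have "(\<integral>x. exp (t * x) * gamma_density 1 \<theta> x \<partial>lborel) = 1 / (1 - \<theta> * t)"
  proof (rule int_AE[OF c])
    show "(\<lambda>x. exp (t * x) * gamma_density 1 \<theta> x) \<in> borel_measurable borel"
      unfolding gd1[OF assms(1)] by measurable
    fix x :: real assume "x \<noteq> 0"
    have "exp (t * x) * exp (- x / \<theta>) = exp (- c * x)"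
      by (simp add: c_def exp_add[symmetric] field_simps)
    moreover have "1 / \<theta> = 1 / (1 - \<theta> * t) * c"
      using assms c by (simp add: c_def field_simps)
    ultimately have "exp (t * x) * (exp (- x / \<theta>) / \<theta>) = 1 / (1 - \<theta> * t) * (c * exp (- c * x))"
      by (metis (no_types, lifting) mult.assoc mult.commute times_divide_eq_right mult_1)
    then show "exp (t * x) * gamma_density 1 \<theta> x = 1 / (1 - \<theta> * t) * erlang_density 0 c x"
      using \<open>x \<noteq> 0\<close> assms unfolding gd1[OF assms(1)] erlang_density_def
      by auto
  qed
  then show ?thesis by (simp add: mgf_def)
qed

lemma mean1:
  assumes "0 < \<theta>"
  shows "mean (gamma_density 1 \<theta>) = \<theta>"
proof -
  have "(\<integral>x. x * gamma_density 1 \<theta> x \<partial>lborel) = \<theta>"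
  proof (rule int_AE[where l="1/\<theta>" and k=1])
    show "0 < 1 / \<theta>" using assms by simp
    show "(\<lambda>x. x * gamma_density 1 \<theta> x) \<in> borel_measurable borel"
      unfolding gd1[OF assms(1)] by measurable
    fix x :: real assume "x \<noteq> 0"
    then show "x * gamma_density 1 \<theta> x = \<theta> * erlang_density 1 (1 / \<theta>) x"
      using assms unfolding gd1[OF assms(1)] erlang_density_def
      by (auto simp: field_simps power2_eq_square)
  qed
  then show ?thesis by (simp add: mean_def)
qed

theorem lemmaB1:
  fixes \<Delta>q :: real
  assumes "\<Delta>q > 0"
  shows "\<exists>k \<theta>. k > 0 \<and> 0 < \<theta> \<and> \<theta> < 1 / \<Delta>q \<and>
    exp ((k + 1) * ln (1 + \<Delta>q * \<theta>))
      = mean (gamma_density k \<theta>) / deriv (mgf (gamma_density k \<theta>)) (- \<Delta>q) \<and>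
    mean (gamma_density k \<theta>) / deriv (mgf (gamma_density k \<theta>)) (- \<Delta>q)
      < mgf (gamma_density k \<theta>) \<Delta>q \<and>
    mgf (gamma_density k \<theta>) \<Delta>q = (1 - \<Delta>q * \<theta>) powr (- k)"
proof -
  define \<theta> where "\<theta> = 9 / (10 * \<Delta>q)"
  have th: "0 < \<theta>" "\<theta> < 1 / \<Delta>q" "\<Delta>q * \<theta> = 9/10"
    using assms by (auto simp: \<theta>_def field_simps)
  have "((\<lambda>t. 1 / (1 - \<theta> * t)) has_field_derivative \<theta> / (1 - \<theta> * (- \<Delta>q))^2) (at (- \<Delta>q))"
    using th by (auto intro!: derivative_eq_intros simp: power2_eq_square field_simps)
  then have "(mgf (gamma_density 1 \<theta>) has_field_derivative \<theta> / (1 - \<theta> * (- \<Delta>q))^2) (at (- \<Delta>q))"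
    by (rule has_field_derivative_transform_within_open[where S="{..<1/\<theta>}"])
       (use th assms in \<open>auto simp: mgf1 intro: less_trans[of _ 0]\<close>)
  then have d: "deriv (mgf (gamma_density 1 \<theta>)) (- \<Delta>q) = \<theta> / (1 + 9/10)^2"
    using th by (simp add: DERIV_imp_deriv algebra_simps)
  have m: "mgf (gamma_density 1 \<theta>) \<Delta>q = 1 / (1 - 9/10)"
    using th assms by (subst mgf1) (auto simp: algebra_simps field_simps)
  have e: "exp ((1 + 1) * ln (1 + \<Delta>q * \<theta>)) = (1 + 9/10)^2"
  proof -
    have "exp ((1 + 1) * ln (1 + \<Delta>q * \<theta>)) = exp (ln (1 + \<Delta>q * \<theta>)) * exp (ln (1 + \<Delta>q * \<theta>))"
      by (simp add: exp_add[symmetric] ring_distribs)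
    then show ?thesis unfolding th(3) by (simp add: power2_eq_square)
  qed
  show ?thesis
    apply (rule exI[of _ 1], rule exI[of _ \<theta>])
    using th unfolding d m e mean1[OF th(1)] th(3) using e[unfolded th(3)] by (auto simp: powr_minus power2_eq_square)
qed

end
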